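(* Let $\tau>0$, $T=\tau$, $H\in(1/2,1)$, $\lambda\in(1/2,H)$, and let $B^H$ be a fractional Brownian motion on $[0,T]$ with Hurst parameter $H$; fix a path of $B^H$ which is $\lambda$-Hölder continuous on $[0,T]$ and write $\|B^H\|_\lambda$ for its $\lambda$-Hölder seminorm on $[0,T]$. Let $\xi\in C^\lambda([-\tau,0];\mathbb{R})$ and let $f:C^\lambda([-\tau,0];\mathbb{R})\to\mathbb{R}$ satisfy $|f(\psi_2)-f(\psi_1)|\le M_1\|\psi_2-\psi_1\|$ for all $\psi_1,\psi_2\in C^\lambda([-\tau,0];\mathbb{R})$, for some constant $M_1>0$. Let $n>\tau$ be an integer, $\Delta=\tau/n$, $t_k=k\Delta$ for $k=-n,\dots,n$, and let $X^{(n)}$ be the Euler scheme $$X^{(n)}(t)=\xi(t),\ t\in[-\tau,0];\qquad X^{(n)}(t)=X^{(n)}(t_k)+f(\overline X^{(n)}_{t_k})\,(B^H(t)-B^H(t_k)),\ t\in[t_k,t_{k+1}],\ k=0,\dots,n-1.$$ For $s\le t$ in $\{t_0,\dots,t_n\}$ define $R^n(s,t)=X^{(n)}(t)-X^{(n)}(s)-f(\overline X^{(n)}_s)(B^H(t)-B^H(s))$. Then for all $s\le u\le t$ in $\{t_0,\dots,t_n\}$, $$|R^n(s,t)-R^n(s,u)-R^n(u,t)|\le M_1\,\|\overline X^{(n)}_u-\overline X^{(n)}_s\|\,\|B^H\|_\lambda\,|t-s|^\lambda.$$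
   Context: $\|\cdot\|$ denotes the supremum norm on $[-\tau,0]$. For $t\in[0,T]$, the segment $\overline X^{(n)}_t:[-\tau,0]\to\mathbb{R}$ is $\overline X^{(n)}_t(\theta)=X^{(n)}(t+\theta)$. $C^\lambda([-\tau,0];\mathbb{R})$ is the space of $\lambda$-Hölder continuous real functions on $[-\tau,0]$. *)

theory Defs
  imports "HOL-Analysis.Analysis"
begin

definition holder_on :: "real \<Rightarrow> real set \<Rightarrow> (real \<Rightarrow> real) \<Rightarrow> bool" where
  "holder_on lam S g \<longleftrightarrow> (\<exists>C. \<forall>s\<in>S. \<forall>t\<in>S. \<bar>g t - g s\<bar> \<le> C * \<bar>t - s\<bar> powr lam)"

definition holder_seminorm :: "real \<Rightarrow> real set \<Rightarrow> (real \<Rightarrow> real) \<Rightarrow> real" where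
  "holder_seminorm lam S g =
     Sup {\<bar>g t - g s\<bar> / \<bar>t - s\<bar> powr lam | s t. s \<in> S \<and> t \<in> S \<and> s \<noteq> t}"

definition supnorm :: "real \<Rightarrow> (real \<Rightarrow> real) \<Rightarrow> real" where
  "supnorm tau \<psi> = Sup ((\<lambda>\<theta>. \<bar>\<psi> \<theta>\<bar>) ` {-tau..0})"

definition seg :: "(real \<Rightarrow> real) \<Rightarrow> real \<Rightarrow> (real \<Rightarrow> real)" where
  "seg X t = (\<lambda>\<theta>. X (t + \<theta>))"

definition remR :: "((real \<Rightarrow> real) \<Rightarrow> real) \<Rightarrow> (real \<Rightarrow> real) \<Rightarrow> (real \<Rightarrow> real) \<Rightarrow> real \<Rightarrow> real \<Rightarrow> real" where
  "remR f B X s t = X t - X s - f (seg X s) * (B t - B s)"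

end

theory Submission
  imports Defs
begin

lemma holder_mono_set:
  "holder_on lam S g \<Longrightarrow> T \<subseteq> S \<Longrightarrow> holder_on lam T g"
  unfolding holder_on_def by blast

lemma holder_nonneg:
  assumes "holder_on lam S g"
  obtains C where "C \<ge> 0" "\<forall>s\<in>S. \<forall>t\<in>S. \<bar>g t - g s\<bar> \<le> C * \<bar>t - s\<bar> powr lam"
proof -
  obtain C where C: "\<forall>s\<in>S. \<forall>t\<in>S. \<bar>g t - g s\<bar> \<le> C * \<bar>t - s\<bar> powr lam"
    using assms unfolding holder_on_def by blast
  have "\<forall>s\<in>S. \<forall>t\<in>S. \<bar>g t - g s\<bar> \<le> max C 0 * \<bar>t - s\<bar> powr lam"
  proof (intro ballI)
    fix s t assume "s \<in> S" "t \<in> S"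
    then have "\<bar>g t - g s\<bar> \<le> C * \<bar>t - s\<bar> powr lam" using C by blast
    also have "\<dots> \<le> max C 0 * \<bar>t - s\<bar> powr lam"
      by (intro mult_right_mono) auto
    finally show "\<bar>g t - g s\<bar> \<le> max C 0 * \<bar>t - s\<bar> powr lam" .
  qed
  then show ?thesis using that[of "max C 0"] by auto
qed

lemma holder_join:
  assumes h1: "holder_on lam {a..b} g" and h2: "holder_on lam {b..c} g"
    and ab: "a \<le> b" and bc: "b \<le> c" and lam: "lam \<ge> 0"
  shows "holder_on lam {a..c} g"
proof -
  obtain C1 where C1: "C1 \<ge> 0" "\<forall>s\<in>{a..b}. \<forall>t\<in>{a..b}. \<bar>g t - g s\<bar> \<le> C1 * \<bar>t - s\<bar> powr lam"
    using holder_nonneg[OF h1] by blast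
  obtain C2 where C2: "C2 \<ge> 0" "\<forall>s\<in>{b..c}. \<forall>t\<in>{b..c}. \<bar>g t - g s\<bar> \<le> C2 * \<bar>t - s\<bar> powr lam"
    using holder_nonneg[OF h2] by blast
  have key: "\<bar>g t - g s\<bar> \<le> (C1 + C2) * \<bar>t - s\<bar> powr lam"
    if "s \<in> {a..c}" "t \<in> {a..c}" "s \<le> t" for s t
  proof -
    have p: "0 \<le> \<bar>t - s\<bar> powr lam" by simp
    consider "t \<le> b" | "b \<le> s" | "s \<le> b" "b \<le> t" by linarith
    then show ?thesis
    proof cases
      case 1
      then have "s \<in> {a..b}" "t \<in> {a..b}" using that by auto
      then have "\<bar>g t - g s\<bar> \<le> C1 * \<bar>t - s\<bar> powr lam" using C1(2) by blast
      also have "\<dots> \<le> (C1 + C2) * \<bar>t - s\<bar> powr lam" using C2(1) p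
        by (intro mult_right_mono) auto
      finally show ?thesis .
    next
      case 2
      then have "s \<in> {b..c}" "t \<in> {b..c}" using that by auto
      then have "\<bar>g t - g s\<bar> \<le> C2 * \<bar>t - s\<bar> powr lam" using C2(2) by blast
      also have "\<dots> \<le> (C1 + C2) * \<bar>t - s\<bar> powr lam" using C1(1) p
        by (intro mult_right_mono) auto
      finally show ?thesis .
    next
      case 3
      have "s \<in> {a..b}" "b \<in> {a..b}" "b \<in> {b..c}" "t \<in> {b..c}" using that 3 ab bc by auto
      then have e1: "\<bar>g b - g s\<bar> \<le> C1 * \<bar>b - s\<bar> powr lam"
        and e2: "\<bar>g t - g b\<bar> \<le> C2 * \<bar>t - b\<bar> powr lam" using C1(2) C2(2) by blast+
      have m1: "\<bar>b - s\<bar> powr lam \<le> \<bar>t - s\<bar> powr lam"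
        using 3 lam by (intro powr_mono2) auto
      have m2: "\<bar>t - b\<bar> powr lam \<le> \<bar>t - s\<bar> powr lam"
        using 3 lam by (intro powr_mono2) auto
      have "C1 * \<bar>b - s\<bar> powr lam \<le> C1 * \<bar>t - s\<bar> powr lam"
        using m1 C1(1) by (rule mult_left_mono)
      moreover have "C2 * \<bar>t - b\<bar> powr lam \<le> C2 * \<bar>t - s\<bar> powr lam"
        using m2 C2(1) by (rule mult_left_mono)
      ultimately show ?thesis using e1 e2 by (simp add: algebra_simps) linarith
    qed
  qed
  have "\<forall>s\<in>{a..c}. \<forall>t\<in>{a..c}. \<bar>g t - g s\<bar> \<le> (C1 + C2) * \<bar>t - s\<bar> powr lam"
  proof (intro ballI)
    fix s t assume st: "s \<in> {a..c}" "t \<in> {a..c}"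
    show "\<bar>g t - g s\<bar> \<le> (C1 + C2) * \<bar>t - s\<bar> powr lam"
    proof (cases "s \<le> t")
      case True then show ?thesis using key st by blast
    next
      case False
      then have "\<bar>g s - g t\<bar> \<le> (C1 + C2) * \<bar>s - t\<bar> powr lam" using key st by auto
      then show ?thesis by (simp add: abs_minus_commute)
    qed
  qed
  then show ?thesis unfolding holder_on_def by blast
qed

theorem lemma2:
  fixes tau H lam M1 :: real and n :: nat
    and B \<xi> X :: "real \<Rightarrow> real" and f :: "(real \<Rightarrow> real) \<Rightarrow> real"
  assumes tau: "tau > 0"
    and H: "1/2 < H" "H < 1"
    and lam: "1/2 < lam" "lam < H"
    and B_holder: "holder_on lam {0..tau} B"
    and xi_holder: "holder_on lam {-tau..0} \<xi>"
    and M1: "M1 > 0"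
    and f_lip: "\<And>\<psi>1 \<psi>2. holder_on lam {-tau..0} \<psi>1 \<Longrightarrow> holder_on lam {-tau..0} \<psi>2 \<Longrightarrow>
                  \<bar>f \<psi>2 - f \<psi>1\<bar> \<le> M1 * supnorm tau (\<lambda>\<theta>. \<psi>2 \<theta> - \<psi>1 \<theta>)"
    and n: "real n > tau"
    and X_init: "\<And>t. t \<in> {-tau..0} \<Longrightarrow> X t = \<xi> t"
    and X_step: "\<And>k t. k < n \<Longrightarrow> t \<in> {real k * (tau / real n) .. real (Suc k) * (tau / real n)} \<Longrightarrow>
                  X t = X (real k * (tau / real n))
                        + f (seg X (real k * (tau / real n))) * (B t - B (real k * (tau / real n)))"
    and ijk: "i \<le> j" "j \<le> k" "k \<le> n"
  shows "\<bar>remR f B X (real i * (tau / real n)) (real k * (tau / real n))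
          - remR f B X (real i * (tau / real n)) (real j * (tau / real n))
          - remR f B X (real j * (tau / real n)) (real k * (tau / real n))\<bar>
         \<le> M1 * supnorm tau (\<lambda>\<theta>. seg X (real j * (tau / real n)) \<theta> - seg X (real i * (tau / real n)) \<theta>)
              * holder_seminorm lam {0..tau} B
              * \<bar>real k * (tau / real n) - real i * (tau / real n)\<bar> powr lam"
proof -
  define D where "D = tau / real n"
  have npos: "real n > 0" using n tau by linarith
  have Dpos: "D > 0" unfolding D_def using tau npos by simp
  have tD: "\<And>m. m \<le> n \<Longrightarrow> real m * D \<le> tau"
  proof -
    fix m assume "m \<le> n"
    then have "real m * D \<le> real n * D" using Dpos by (intro mult_right_mono) auto
    also have "real n * D = tau" unfolding D_def using npos by simp
    finally show "real m * D \<le> tau" .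
  qed
  have lam0: "lam \<ge> 0" using lam by linarith
  obtain CB where CB: "CB \<ge> 0" "\<forall>s\<in>{0..tau}. \<forall>t\<in>{0..tau}. \<bar>B t - B s\<bar> \<le> CB * \<bar>t - s\<bar> powr lam"
    using holder_nonneg[OF B_holder] by blast
  have Xh: "holder_on lam {-tau..real m * D} X" if "m \<le> n" for m
    using that
  proof (induction m)
    case 0
    have "holder_on lam {-tau..0} X"
      using xi_holder X_init unfolding holder_on_def by simp
    then show ?case by simp
  next
    case (Suc m)
    then have IH: "holder_on lam {-tau..real m * D} X" by simp
    have mn: "m < n" using Suc by simp
    define c where "c = f (seg X (real m * D))"
    have piece: "holder_on lam {real m * D..real (Suc m) * D} X"
    proof -
      have sub: "{real m * D..real (Suc m) * D} \<subseteq> {0..tau}"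
        using tD[of "Suc m"] mn Dpos by auto
      have "\<forall>s\<in>{real m * D..real (Suc m) * D}. \<forall>t\<in>{real m * D..real (Suc m) * D}.
              \<bar>X t - X s\<bar> \<le> (\<bar>c\<bar> * CB) * \<bar>t - s\<bar> powr lam"
      proof (intro ballI)
        fix s t assume st: "s \<in> {real m * D..real (Suc m) * D}" "t \<in> {real m * D..real (Suc m) * D}"
        have "X t - X s = c * (B t - B s)"
          using X_step[OF mn, of t] X_step[OF mn, of s] st unfolding c_def D_def
          by (simp add: algebra_simps)
        then have "\<bar>X t - X s\<bar> = \<bar>c\<bar> * \<bar>B t - B s\<bar>" by (simp add: abs_mult)
        also have "\<dots> \<le> \<bar>c\<bar> * (CB * \<bar>t - s\<bar> powr lam)"
          using CB(2) st sub by (intro mult_left_mono) auto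
        finally show "\<bar>X t - X s\<bar> \<le> (\<bar>c\<bar> * CB) * \<bar>t - s\<bar> powr lam" by simp
      qed
      then show ?thesis unfolding holder_on_def by blast
    qed
    show ?case
      by (rule holder_join[OF IH piece]) (use tau Dpos lam0 in \<open>auto intro: order_trans[of _ 0]\<close>)
  qed
  have Xall: "holder_on lam {-tau..tau} X"
    using Xh[of n] npos unfolding D_def by simp
  have segh: "holder_on lam {-tau..0} (seg X (real m * D))" if "m \<le> n" for m
  proof -
    have u: "0 \<le> real m * D" "real m * D \<le> tau" using tD[OF that] Dpos by auto
    obtain C where C: "\<forall>s\<in>{-tau..tau}. \<forall>t\<in>{-tau..tau}. \<bar>X t - X s\<bar> \<le> C * \<bar>t - s\<bar> powr lam"
      using Xall unfolding holder_on_def by blast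
    have "\<forall>s\<in>{-tau..0}. \<forall>t\<in>{-tau..0}. \<bar>seg X (real m * D) t - seg X (real m * D) s\<bar> \<le> C * \<bar>t - s\<bar> powr lam"
    proof (intro ballI)
      fix s t assume st: "s \<in> {-tau..0}" "t \<in> {-tau..0}"
      have "\<bar>X (real m * D + t) - X (real m * D + s)\<bar> \<le> C * \<bar>(real m * D + t) - (real m * D + s)\<bar> powr lam"
      proof -
        have "real m * D + t \<in> {-tau..tau}" "real m * D + s \<in> {-tau..tau}" using st u by auto
        then show ?thesis using C by blast
      qed
      then show "\<bar>seg X (real m * D) t - seg X (real m * D) s\<bar> \<le> C * \<bar>t - s\<bar> powr lam"
        unfolding seg_def by simp
    qed
    then show ?thesis unfolding holder_on_def by blast
  qed
  define s where "s = real i * D"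
  define u where "u = real j * D"
  define t where "t = real k * D"
  have su: "s \<le> u" unfolding s_def u_def using ijk Dpos by (intro mult_right_mono) auto
  have ut: "u \<le> t" unfolding t_def u_def using ijk Dpos by (intro mult_right_mono) auto
  have u0: "0 \<le> u" unfolding u_def using Dpos by simp
  have tt: "t \<le> tau" unfolding t_def using tD ijk by simp
  have eq: "remR f B X s t - remR f B X s u - remR f B X u t
      = (f (seg X u) - f (seg X s)) * (B t - B u)"
    unfolding remR_def by (simp add: algebra_simps)
  have fl: "\<bar>f (seg X u) - f (seg X s)\<bar> \<le> M1 * supnorm tau (\<lambda>\<theta>. seg X u \<theta> - seg X s \<theta>)"
    unfolding s_def u_def using ijk by (intro f_lip segh) auto
  define S where "S = {\<bar>B t - B s\<bar> / \<bar>t - s\<bar> powr lam | s t. s \<in> {0..tau} \<and> t \<in> {0..tau} \<and> s \<noteq> t}"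
  have sem: "holder_seminorm lam {0..tau} B = Sup S" unfolding holder_seminorm_def S_def by simp
  have bdd: "bdd_above S"
  proof (rule bdd_aboveI)
    fix x assume "x \<in> S"
    then obtain a b where ab: "x = \<bar>B b - B a\<bar> / \<bar>b - a\<bar> powr lam" "a \<in> {0..tau}" "b \<in> {0..tau}" "a \<noteq> b"
      unfolding S_def by blast
    have pp: "\<bar>b - a\<bar> powr lam > 0" using ab(4) by simp
    show "x \<le> CB" using CB(2) ab pp by (simp add: divide_le_eq)
  qed
  have semnn: "0 \<le> Sup S"
  proof -
    have "\<bar>B tau - B 0\<bar> / \<bar>tau - 0\<bar> powr lam \<in> S" unfolding S_def using tau
      by (intro CollectI exI[of _ 0] exI[of _ tau]) auto
    moreover have "0 \<le> \<bar>B tau - B 0\<bar> / \<bar>tau - 0\<bar> powr lam" by simp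
    ultimately show ?thesis using cSup_upper[OF _ bdd] by (meson order_trans)
  qed
  have Bb: "\<bar>B t - B u\<bar> \<le> Sup S * \<bar>t - s\<bar> powr lam"
  proof (cases "t = u")
    case True then show ?thesis using semnn by simp
  next
    case False
    have pp: "\<bar>t - u\<bar> powr lam > 0" using False by simp
    have "\<bar>B t - B u\<bar> / \<bar>t - u\<bar> powr lam \<in> S" unfolding S_def using False u0 ut tt
      by (intro CollectI exI[of _ u] exI[of _ t]) auto
    then have "\<bar>B t - B u\<bar> / \<bar>t - u\<bar> powr lam \<le> Sup S" using cSup_upper[OF _ bdd] by blast
    then have "\<bar>B t - B u\<bar> \<le> Sup S * \<bar>t - u\<bar> powr lam" using pp by (simp add: divide_le_eq)
    also have "\<dots> \<le> Sup S * \<bar>t - s\<bar> powr lam"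
      using semnn su ut lam0 by (intro mult_left_mono powr_mono2) auto
    finally show ?thesis .
  qed
  have "\<bar>(f (seg X u) - f (seg X s)) * (B t - B u)\<bar>
      \<le> (M1 * supnorm tau (\<lambda>\<theta>. seg X u \<theta> - seg X s \<theta>)) * (Sup S * \<bar>t - s\<bar> powr lam)"
    unfolding abs_mult using fl Bb by (intro mult_mono) auto
  then show ?thesis using eq sem unfolding s_def u_def t_def D_def by (simp add: mult.assoc)
qed

end
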